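(* Let $G$ be a graph such that either $G$ has more than one connected component containing an edge, or $G$ has a connected component containing at least three vertices. Then $\mathcal{Z}^{\mathrm{TE}}_+(G)$ is not isomorphic to any tree.
   Context: PSD forcing: vertices are colored blue or white; if $B$ is the current set of blue vertices, $C$ a connected component of $G-B$, and $u$ a blue vertex with $N_G(u)\cap V(C)=\{v\}$, then $u$ may force $v$ to become blue. A PSD forcing set is a set of initially blue vertices from which repeated application of this rule turns every vertex blue; $\mathrm{Z}_+(G)$ is the minimum size of a PSD forcing set. $\mathcal{Z}^{\mathrm{TE}}_+(G)$ has as vertices the minimum PSD forcing sets of $G$, with $S_1S_2$ an edge iff $S_1\setminus S_2=\{v_1\}$ and $S_2\setminus S_1=\{v_2\}$ for some vertices $v_1,v_2$. *)

theory Defs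
  imports Main
begin

definition graph :: "'a set \<Rightarrow> ('a \<Rightarrow> 'a \<Rightarrow> bool) \<Rightarrow> bool" where
  "graph V E \<longleftrightarrow> finite V \<and> (\<forall>u v. E u v \<longrightarrow> u \<in> V \<and> v \<in> V \<and> u \<noteq> v \<and> E v u)"

definition conn_in :: "('a \<Rightarrow> 'a \<Rightarrow> bool) \<Rightarrow> 'a set \<Rightarrow> 'a \<Rightarrow> 'a \<Rightarrow> bool" where
  "conn_in E W u v \<longleftrightarrow> u \<in> W \<and> v \<in> W \<and> (\<lambda>x y. E x y \<and> x \<in> W \<and> y \<in> W)\<^sup>*\<^sup>* u v"

definition comp_in :: "('a \<Rightarrow> 'a \<Rightarrow> bool) \<Rightarrow> 'a set \<Rightarrow> 'a \<Rightarrow> 'a set" where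
  "comp_in E W v = {w. conn_in E W v w}"

definition psd_force :: "'a set \<Rightarrow> ('a \<Rightarrow> 'a \<Rightarrow> bool) \<Rightarrow> 'a set \<Rightarrow> 'a \<Rightarrow> 'a \<Rightarrow> bool" where
  "psd_force V E B u v \<longleftrightarrow> u \<in> B \<and> v \<in> V - B \<and>
     {w. E u w} \<inter> comp_in E (V - B) v = {v}"

inductive psd_reach :: "'a set \<Rightarrow> ('a \<Rightarrow> 'a \<Rightarrow> bool) \<Rightarrow> 'a set \<Rightarrow> 'a set \<Rightarrow> bool"
  for V E S where
  start: "psd_reach V E S S"
| step: "psd_reach V E S B \<Longrightarrow> psd_force V E B u v \<Longrightarrow> psd_reach V E S (insert v B)"

definition psd_forcing_set :: "'a set \<Rightarrow> ('a \<Rightarrow> 'a \<Rightarrow> bool) \<Rightarrow> 'a set \<Rightarrow> bool" where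
  "psd_forcing_set V E S \<longleftrightarrow> S \<subseteq> V \<and> psd_reach V E S V"

definition Zplus :: "'a set \<Rightarrow> ('a \<Rightarrow> 'a \<Rightarrow> bool) \<Rightarrow> nat" where
  "Zplus V E = Min {card S | S. psd_forcing_set V E S}"

definition min_psd_forcing_set :: "'a set \<Rightarrow> ('a \<Rightarrow> 'a \<Rightarrow> bool) \<Rightarrow> 'a set \<Rightarrow> bool" where
  "min_psd_forcing_set V E S \<longleftrightarrow> psd_forcing_set V E S \<and> card S = Zplus V E"

definition TE_vertices :: "'a set \<Rightarrow> ('a \<Rightarrow> 'a \<Rightarrow> bool) \<Rightarrow> 'a set set" where
  "TE_vertices V E = {S. min_psd_forcing_set V E S}"

definition TE_edge :: "'a set \<Rightarrow> ('a \<Rightarrow> 'a \<Rightarrow> bool) \<Rightarrow> 'a set \<Rightarrow> 'a set \<Rightarrow> bool" where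
  "TE_edge V E S1 S2 \<longleftrightarrow> S1 \<in> TE_vertices V E \<and> S2 \<in> TE_vertices V E \<and>
     (\<exists>v1 v2. S1 - S2 = {v1} \<and> S2 - S1 = {v2})"

definition connected_graph :: "'a set \<Rightarrow> ('a \<Rightarrow> 'a \<Rightarrow> bool) \<Rightarrow> bool" where
  "connected_graph V E \<longleftrightarrow> V \<noteq> {} \<and> (\<forall>u\<in>V. \<forall>v\<in>V. conn_in E V u v)"

definition is_cycle :: "('a \<Rightarrow> 'a \<Rightarrow> bool) \<Rightarrow> 'a list \<Rightarrow> bool" where
  "is_cycle E cs \<longleftrightarrow> length cs \<ge> 3 \<and> distinct cs \<and>
     (\<forall>i. Suc i < length cs \<longrightarrow> E (cs ! i) (cs ! Suc i)) \<and> E (last cs) (hd cs)"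

definition acyclic_graph :: "'a set \<Rightarrow> ('a \<Rightarrow> 'a \<Rightarrow> bool) \<Rightarrow> bool" where
  "acyclic_graph V E \<longleftrightarrow> \<not> (\<exists>cs. set cs \<subseteq> V \<and> is_cycle E cs)"

definition is_tree :: "'a set \<Rightarrow> ('a \<Rightarrow> 'a \<Rightarrow> bool) \<Rightarrow> bool" where
  "is_tree V E \<longleftrightarrow> graph V E \<and> connected_graph V E \<and> acyclic_graph V E"

definition graph_iso :: "'a set \<Rightarrow> ('a \<Rightarrow> 'a \<Rightarrow> bool) \<Rightarrow> 'b set \<Rightarrow> ('b \<Rightarrow> 'b \<Rightarrow> bool) \<Rightarrow> ('a \<Rightarrow> 'b) \<Rightarrow> bool" where
  "graph_iso V1 E1 V2 E2 f \<longleftrightarrow> bij_betw f V1 V2 \<and>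
     (\<forall>u\<in>V1. \<forall>v\<in>V1. E1 u v \<longleftrightarrow> E2 (f u) (f v))"

end

theory Submission
  imports Defs
begin


lemma conn_W: "conn_in E W u v \<Longrightarrow> u \<in> W \<and> v \<in> W"
  by (simp add: conn_in_def)

lemma conn_refl: "v \<in> W \<Longrightarrow> conn_in E W v v"
  by (simp add: conn_in_def)

lemma conn_step: "conn_in E W v x \<Longrightarrow> E x y \<Longrightarrow> y \<in> W \<Longrightarrow> conn_in E W v y"
  unfolding conn_in_def by (metis (mono_tags, lifting) rtranclp.rtrancl_into_rtrancl)

lemma conn_induct[consumes 1, case_names base step]:
  assumes "conn_in E W v w" "P v"
    "\<And>x y. conn_in E W v x \<Longrightarrow> P x \<Longrightarrow> E x y \<Longrightarrow> x \<in> W \<Longrightarrow> y \<in> W \<Longrightarrow> P y"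
  shows "P w"
proof -
  let ?R = "\<lambda>x y. E x y \<and> x \<in> W \<and> y \<in> W"
  have v: "v \<in> W" using assms(1) by (simp add: conn_in_def)
  have "?R\<^sup>*\<^sup>* v w" using assms(1) by (simp add: conn_in_def)
  then have "P w \<and> conn_in E W v w"
  proof (induction rule: rtranclp_induct)
    case base
    have "conn_in E W v v" using v by (rule conn_refl)
    then show ?case using assms(2) by blast
  next
    case (step y z)
    have c: "conn_in E W v y" and py: "P y" using step.IH by blast+
    have e: "E y z" "y \<in> W" "z \<in> W" using step.hyps(2) by blast+
    have "conn_in E W v z" using conn_step[OF c e(1) e(3)] .
    moreover have "P z" using assms(3)[OF c py e] .
    ultimately show ?case by blast
  qed
  then show ?thesis by blast
qed

lemma conn_mono: assumes c: "conn_in E W u v" and s: "W \<subseteq> W'" shows "conn_in E W' u v"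
  using c
proof (rule conn_induct[where P="\<lambda>w. conn_in E W' u w"])
  have "u \<in> W" using conn_W[OF c] by (rule conjunct1)
  then have "u \<in> W'" using s by (rule subsetD[rotated])
  then show "conn_in E W' u u" by (rule conn_refl)
next
  fix x y assume a: "conn_in E W' u x" "E x y" "y \<in> W"
  have "y \<in> W'" using a(3) s by (rule subsetD[rotated])
  then show "conn_in E W' u y" by (rule conn_step[OF a(1) a(2)])
qed

lemma conn_sym: assumes g: "graph V E" and c: "conn_in E W u v" shows "conn_in E W v u"
  using c
proof (rule conn_induct[where P="\<lambda>w. conn_in E W w u"])
  have "u \<in> W" using conn_W[OF c] by (rule conjunct1)
  then show "conn_in E W u u" by (rule conn_refl)
next
  fix x y assume a: "conn_in E W x u" "E x y" "x \<in> W" "y \<in> W"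
  have "E y x" using g a(2) unfolding graph_def by simp
  have r: "(\<lambda>x y. E x y \<and> x \<in> W \<and> y \<in> W)\<^sup>*\<^sup>* x u" "u \<in> W"
    using a(1) unfolding conn_in_def by simp_all
  have "(\<lambda>x y. E x y \<and> x \<in> W \<and> y \<in> W)\<^sup>*\<^sup>* y u"
    by (rule converse_rtranclp_into_rtranclp[of _ y x, OF _ r(1)]) (simp add: \<open>E y x\<close> a)
  then show "conn_in E W y u" using a(4) r(2) unfolding conn_in_def by simp
qed

lemma conn_trans: assumes c1: "conn_in E W u v" and c2: "conn_in E W v w" shows "conn_in E W u w"
  using c2
proof (rule conn_induct[where P="\<lambda>w. conn_in E W u w"])
  show "conn_in E W u v" by (rule c1)
next
  fix x y assume "conn_in E W u x" "E x y" "y \<in> W"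
  then show "conn_in E W u y" by (rule conn_step)
qed

lemma conn_restrict:
  assumes c: "conn_in E W v w" and h: "\<And>z. conn_in E W v z \<Longrightarrow> z \<in> W'"
  shows "conn_in E W' v w"
  using c
proof (rule conn_induct[where P="\<lambda>w. conn_in E W' v w"])
  have "v \<in> W" using conn_W[OF c] by (rule conjunct1)
  then have "conn_in E W v v" by (rule conn_refl)
  then have "v \<in> W'" by (rule h)
  then show "conn_in E W' v v" by (rule conn_refl)
next
  fix x y assume a: "conn_in E W v x" "conn_in E W' v x" "E x y" "x \<in> W" "y \<in> W"
  have "conn_in E W v y" using conn_step[OF a(1) a(3) a(5)] .
  then have "y \<in> W'" by (rule h)
  then show "conn_in E W' v y" by (rule conn_step[OF a(2) a(3)])
qed

lemma comp_mem: "w \<in> comp_in E W v \<longleftrightarrow> conn_in E W v w"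
  by (simp add: comp_in_def)

lemma force_edge: "psd_force V E B u v \<Longrightarrow> E u v"
  unfolding psd_force_def by (metis IntD1 insertI1 mem_Collect_eq)

lemma force_basic: "psd_force V E B u v \<Longrightarrow> u \<in> B \<and> v \<in> V \<and> v \<notin> B"
  unfolding psd_force_def by simp

lemma force_N: "psd_force V E B u v \<Longrightarrow> E u w \<Longrightarrow> conn_in E (V - B) v w \<Longrightarrow> w = v"
  unfolding psd_force_def comp_in_def by (metis IntI mem_Collect_eq singletonD)

lemma force_intro:
  assumes "u \<in> B" "v \<in> V" "v \<notin> B" "E u v"
    "\<And>w. E u w \<Longrightarrow> conn_in E (V - B) v w \<Longrightarrow> w = v"
  shows "psd_force V E B u v"
proof -
  have "conn_in E (V - B) v v" using assms(2,3) by (simp add: conn_refl)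
  then have "{w. E u w} \<inter> comp_in E (V - B) v = {v}"
    using assms(4,5) unfolding comp_in_def by auto
  then show ?thesis using assms(1-3) unfolding psd_force_def by simp
qed

lemma reach_sub: "psd_reach V E S B \<Longrightarrow> S \<subseteq> B"
  by (induction rule: psd_reach.induct) auto

lemma reach_V: "psd_reach V E S B \<Longrightarrow> S \<subseteq> V \<Longrightarrow> B \<subseteq> V"
  by (induction rule: psd_reach.induct) (auto dest: force_basic)

lemma reach_trans: "psd_reach V E B C \<Longrightarrow> psd_reach V E S B \<Longrightarrow> psd_reach V E S C"
  by (induction rule: psd_reach.induct) (auto intro: psd_reach.step)



lemma reach_mono:
  "psd_reach V E S B \<Longrightarrow> S \<subseteq> S' \<Longrightarrow> \<exists>B'. psd_reach V E S' B' \<and> B \<subseteq> B'"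
proof (induction rule: psd_reach.induct)
  case start then show ?case using psd_reach.start by blast
next
  case (step B u v)
  obtain B' where B': "psd_reach V E S' B'" "B \<subseteq> B'" using step.IH step.prems by blast
  show ?case
  proof (cases "v \<in> B'")
    case True then show ?thesis using B' by auto
  next
    case False
    have fb: "u \<in> B \<and> v \<in> V \<and> v \<notin> B" using step.hyps(2) by (rule force_basic)
    have "psd_force V E B' u v"
    proof (rule force_intro)
      show "u \<in> B'" using fb B'(2) by auto
      show "v \<in> V" using fb by simp
      show "v \<notin> B'" by fact
      show "E u v" using step.hyps(2) by (rule force_edge)
      fix w assume w: "E u w" "conn_in E (V - B') v w"
      have "V - B' \<subseteq> V - B" using B'(2) by auto
      then have "conn_in E (V - B) v w" using w(2) conn_mono by metis
      then show "w = v" using force_N[OF step.hyps(2) w(1)] by simp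
    qed
    then have "psd_reach V E S' (insert v B')" using B'(1) psd_reach.step by metis
    then show ?thesis using B'(2) by auto
  qed
qed

lemma zplus_facts:
  assumes g: "graph V E"
  shows "\<exists>S. min_psd_forcing_set V E S"
    and "psd_forcing_set V E S \<Longrightarrow> Zplus V E \<le> card S"
proof -
  let ?A = "{card S |S. psd_forcing_set V E S}"
  have fV: "finite V" using g by (simp add: graph_def)
  have "?A \<subseteq> card ` Pow V" unfolding psd_forcing_set_def by auto
  then have fin: "finite ?A" using fV by (meson finite_Pow_iff finite_imageI finite_subset)
  have "psd_forcing_set V E V" unfolding psd_forcing_set_def by (simp add: psd_reach.start)
  then have ne: "?A \<noteq> {}" by auto
  have "Zplus V E \<in> ?A" unfolding Zplus_def using fin ne by (rule Min_in)
  then show "\<exists>S. min_psd_forcing_set V E S" unfolding min_psd_forcing_set_def by auto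
  show "psd_forcing_set V E S \<Longrightarrow> Zplus V E \<le> card S"
    unfolding Zplus_def using fin by (intro Min_le) auto
qed

lemma min_finite: "graph V E \<Longrightarrow> min_psd_forcing_set V E S \<Longrightarrow> finite S \<and> S \<subseteq> V"
  unfolding min_psd_forcing_set_def psd_forcing_set_def graph_def by (auto intro: finite_subset)



lemma graph_E: "graph V E \<Longrightarrow> E u v \<Longrightarrow> u \<in> V \<and> v \<in> V \<and> u \<noteq> v \<and> E v u"
  unfolding graph_def by metis

lemma swap:
  assumes g: "graph V E" and m: "min_psd_forcing_set V E S" and f: "psd_force V E S u v"
  shows "psd_force V E (insert v (S - {u})) v u"
    and "min_psd_forcing_set V E (insert v (S - {u}))"
proof -
  let ?S' = "insert v (S - {u})"
  have fb: "u \<in> S \<and> v \<in> V \<and> v \<notin> S" using f by (rule force_basic)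
  have SV: "finite S \<and> S \<subseteq> V" using g m by (rule min_finite)
  have euv: "E u v" using f by (rule force_edge)
  have ge: "u \<in> V \<and> v \<in> V \<and> u \<noteq> v \<and> E v u" using g euv by (rule graph_E)
  have inv: "z = u \<or> (z \<in> V - S \<and> \<not> conn_in E (V - S) v z)" if c: "conn_in E (V - ?S') u z" for z
    using c
  proof (rule conn_induct[where P="\<lambda>z. z = u \<or> (z \<in> V - S \<and> \<not> conn_in E (V - S) v z)"])
    show "u = u \<or> (u \<in> V - S \<and> \<not> conn_in E (V - S) v u)" by simp
  next
    fix x y assume a: "x = u \<or> (x \<in> V - S \<and> \<not> conn_in E (V - S) v x)" "E x y"
      "x \<in> V - ?S'" "y \<in> V - ?S'"
    show "y = u \<or> (y \<in> V - S \<and> \<not> conn_in E (V - S) v y)"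
    proof (cases "y = u")
      case True then show ?thesis by simp
    next
      case False
      then have yW: "y \<in> V - S" using a(4) by auto
      have "\<not> conn_in E (V - S) v y"
      proof
        assume cy: "conn_in E (V - S) v y"
        show False
        proof (cases "x = u")
          case True
          then have "y = v" using force_N[OF f] a(2) cy by simp
          then show False using a(4) by simp
        next
          case False
          then have xx: "x \<in> V - S" "\<not> conn_in E (V - S) v x" using a(1) by auto
          have "E y x" using graph_E[OF g a(2)] by simp
          then have "conn_in E (V - S) v x" using conn_step[OF cy] xx(1) by simp
          then show False using xx(2) by simp
        qed
      qed
      then show ?thesis using yW by simp
    qed
  qed
  show fo: "psd_force V E ?S' v u"
  proof (rule force_intro)
    show "v \<in> ?S'" by simp
    show "u \<in> V" using ge by simp
    show "u \<notin> ?S'" using ge by simp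
    show "E v u" using ge by simp
    fix w assume w: "E v w" "conn_in E (V - ?S') u w"
    show "w = u"
    proof (rule ccontr)
      assume "w \<noteq> u"
      then have ww: "w \<in> V - S" "\<not> conn_in E (V - S) v w" using inv[OF w(2)] by auto
      have "v \<in> V - S" using fb by simp
      then have "conn_in E (V - S) v v" by (rule conn_refl)
      then have "conn_in E (V - S) v w" using conn_step w(1) ww(1) by metis
      then show False using ww(2) by simp
    qed
  qed
  have r1: "psd_reach V E ?S' (insert u ?S')" using psd_reach.step[OF psd_reach.start fo] .
  have eq: "insert u ?S' = insert v S" using fb by auto
  have rS: "psd_reach V E S V" using m unfolding min_psd_forcing_set_def psd_forcing_set_def by simp
  obtain B' where B': "psd_reach V E (insert v S) B'" "V \<subseteq> B'"
    using reach_mono[OF rS, of "insert v S"] by auto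
  have "insert v S \<subseteq> V" using fb SV by simp
  then have "B' \<subseteq> V" using reach_V[OF B'(1)] by simp
  then have "psd_reach V E (insert v S) V" using B' by (metis subset_antisym)
  then have reach: "psd_reach V E ?S' V" using reach_trans r1 eq by metis
  have sub: "?S' \<subseteq> V" using fb SV by auto
  have "card ?S' = card S"
  proof -
    have "card ?S' = Suc (card (S - {u}))" using SV fb by simp
    also have "\<dots> = card S" using SV fb card_Suc_Diff1 by metis
    finally show ?thesis .
  qed
  then show "min_psd_forcing_set V E ?S'"
    using m reach sub unfolding min_psd_forcing_set_def psd_forcing_set_def by simp
qed

lemma first_force_gen:
  assumes g: "graph V E"
  shows "psd_reach V E S B \<Longrightarrow> (\<exists>z\<in>B. conn_in E (V - S) x z)
     \<Longrightarrow> \<exists>y x'. psd_force V E S y x' \<and> conn_in E (V - S) x x'"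
proof (induction rule: psd_reach.induct)
  case start
  then show ?case using conn_W by fastforce
next
  case (step B y v)
  show ?case
  proof (cases "\<exists>z\<in>B. conn_in E (V - S) x z")
    case True then show ?thesis using step.IH by simp
  next
    case False
    then have cv: "conn_in E (V - S) x v" using step.prems by auto
    have fb: "y \<in> B \<and> v \<in> V \<and> v \<notin> B" using step.hyps(2) by (rule force_basic)
    have eyv: "E y v" using step.hyps(2) by (rule force_edge)
    have ge: "y \<in> V \<and> v \<in> V \<and> y \<noteq> v \<and> E v y" using g eyv by (rule graph_E)
    have "psd_force V E S y v"
    proof (rule force_intro)
      show "y \<in> S"
      proof (rule ccontr)
        assume "y \<notin> S"
        then have "y \<in> V - S" using ge by simp
        then have "conn_in E (V - S) x y" using conn_step[OF cv] ge by simp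
        then show False using False fb by auto
      qed
      show "v \<in> V" using fb by simp
      show "v \<notin> S" using conn_W[OF cv] by simp
      show "E y v" by (rule eyv)
      fix w assume w: "E y w" "conn_in E (V - S) v w"
      have "conn_in E (V - B) v w"
      proof (rule conn_restrict[OF w(2)])
        fix z assume "conn_in E (V - S) v z"
        then have "conn_in E (V - S) x z" using conn_trans[OF cv] by simp
        then show "z \<in> V - B" using False conn_W by fastforce
      qed
      then show "w = v" using force_N[OF step.hyps(2) w(1)] by simp
    qed
    then show ?thesis using cv by blast
  qed
qed

lemma first_force:
  assumes g: "graph V E" and S: "psd_forcing_set V E S" and x: "x \<in> V" "x \<notin> S"
  shows "\<exists>y x'. psd_force V E S y x' \<and> conn_in E (V - S) x x'"
proof -
  have r: "psd_reach V E S V" using S unfolding psd_forcing_set_def by simp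
  have "conn_in E (V - S) x x" using x by (simp add: conn_refl)
  then have "\<exists>z\<in>V. conn_in E (V - S) x z" using x by blast
  then show ?thesis using first_force_gen[OF g r] by simp
qed

lemma min_no_removable:
  assumes g: "graph V E" and m: "min_psd_forcing_set V E S" and a: "a \<in> S" and ab: "E a b"
    and nb: "\<And>t. E a t \<Longrightarrow> t \<in> S"
  shows False
proof -
  let ?S' = "S - {a}"
  have SV: "finite S \<and> S \<subseteq> V" using g m by (rule min_finite)
  have ge: "a \<in> V \<and> b \<in> V \<and> a \<noteq> b \<and> E b a" using g ab by (rule graph_E)
  have fo: "psd_force V E ?S' b a"
  proof (rule force_intro)
    show "b \<in> ?S'" using nb[OF ab] ge by auto
    show "a \<in> V" using ge by simp
    show "a \<notin> ?S'" by simp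
    show "E b a" using ge by simp
    fix w assume w: "E b w" "conn_in E (V - ?S') a w"
    show "w = a"
      using w(2)
    proof (rule conn_induct[where P="\<lambda>z. z = a"])
      show "a = a" by simp
    next
      fix x y assume xy: "x = a" "E x y" "y \<in> V - ?S'"
      then have "y \<in> S" "y \<noteq> a" using nb graph_E[OF g] by auto
      then show "y = a" using xy(3) by simp
    qed
  qed
  have "insert a ?S' = S" using a by auto
  then have r1: "psd_reach V E ?S' S" using psd_reach.step[OF psd_reach.start fo] by simp
  have rS: "psd_reach V E S V" using m unfolding min_psd_forcing_set_def psd_forcing_set_def by simp
  have "psd_forcing_set V E ?S'" using reach_trans[OF rS r1] SV unfolding psd_forcing_set_def by auto
  then have "Zplus V E \<le> card ?S'" using zplus_facts(2)[OF g] by simp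
  moreover have "card ?S' < card S" using SV a by (meson card_Diff1_less)
  moreover have "card S = Zplus V E" using m unfolding min_psd_forcing_set_def by simp
  ultimately show False by simp
qed

lemma conn_local:
  assumes c: "conn_in E W v w" and cl: "\<And>p q. p \<in> H \<Longrightarrow> E p q \<Longrightarrow> q \<in> H" and v: "v \<in> H"
    and eq: "W \<inter> H = W' \<inter> H"
  shows "conn_in E W' v w"
proof (rule conn_restrict[OF c])
  fix z assume cz: "conn_in E W v z"
  have "z \<in> H" using cz
  proof (rule conn_induct[where P="\<lambda>z. z \<in> H"])
    show "v \<in> H" by (rule v)
  next
    fix x y assume "x \<in> H" "E x y" then show "y \<in> H" by (rule cl)
  qed
  then show "z \<in> W'" using conn_W[OF cz] eq by blast
qed



definition tri :: "'a set \<Rightarrow> ('a \<Rightarrow> 'a \<Rightarrow> bool) \<Rightarrow> bool" where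
  "tri V E \<longleftrightarrow> (\<exists>A B D. TE_edge V E A B \<and> TE_edge V E B D \<and> TE_edge V E D A \<and> A \<noteq> B \<and> B \<noteq> D \<and> A \<noteq> D)"

definition quad :: "'a set \<Rightarrow> ('a \<Rightarrow> 'a \<Rightarrow> bool) \<Rightarrow> bool" where
  "quad V E \<longleftrightarrow> (\<exists>A B C D. TE_edge V E A B \<and> TE_edge V E B C \<and> TE_edge V E C D \<and> TE_edge V E D A
      \<and> distinct [A, B, C, D])"

lemma TE_edgeI:
  "min_psd_forcing_set V E A \<Longrightarrow> min_psd_forcing_set V E B \<Longrightarrow> A - B = {x} \<Longrightarrow> B - A = {y}
   \<Longrightarrow> TE_edge V E A B"
  unfolding TE_edge_def TE_vertices_def by blast

lemma T1:
  assumes g: "graph V E" and m: "min_psd_forcing_set V E S"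
    and fa: "psd_force V E S y a" and fb: "psd_force V E S y b" and ab: "a \<noteq> b"
  shows "tri V E"
proof -
  have ma: "min_psd_forcing_set V E (insert a (S - {y}))" using swap(2)[OF g m fa] .
  have mb: "min_psd_forcing_set V E (insert b (S - {y}))" using swap(2)[OF g m fb] .
  have h: "y \<in> S" "a \<notin> S" "b \<notin> S" using force_basic[OF fa] force_basic[OF fb] by auto
  have e1: "TE_edge V E S (insert a (S - {y}))"
    by (rule TE_edgeI[OF m ma, of y a]) (use h in auto)
  have e2: "TE_edge V E (insert a (S - {y})) (insert b (S - {y}))"
    by (rule TE_edgeI[OF ma mb, of a b]) (use h ab in auto)
  have e3: "TE_edge V E (insert b (S - {y})) S"
    by (rule TE_edgeI[OF mb m, of b y]) (use h in auto)
  have d: "S \<noteq> insert a (S - {y})" "insert a (S - {y}) \<noteq> insert b (S - {y})" "S \<noteq> insert b (S - {y})"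
    using h ab by auto
  show ?thesis unfolding tri_def using e1 e2 e3 d by blast
qed

lemma T2:
  assumes g: "graph V E" and m: "min_psd_forcing_set V E S"
    and fa: "psd_force V E S a x" and fb: "psd_force V E S b x" and ab: "a \<noteq> b"
  shows "tri V E"
proof -
  have ma: "min_psd_forcing_set V E (insert x (S - {a}))" using swap(2)[OF g m fa] .
  have mb: "min_psd_forcing_set V E (insert x (S - {b}))" using swap(2)[OF g m fb] .
  have h: "a \<in> S" "b \<in> S" "x \<notin> S" using force_basic[OF fa] force_basic[OF fb] by auto
  have e1: "TE_edge V E S (insert x (S - {a}))"
    by (rule TE_edgeI[OF m ma, of a x]) (use h in auto)
  have e2: "TE_edge V E (insert x (S - {a})) (insert x (S - {b}))"
    by (rule TE_edgeI[OF ma mb, of b a]) (use h ab in auto)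
  have e3: "TE_edge V E (insert x (S - {b})) S"
    by (rule TE_edgeI[OF mb m, of x b]) (use h in auto)
  have d: "S \<noteq> insert x (S - {a})" "insert x (S - {a}) \<noteq> insert x (S - {b})" "S \<noteq> insert x (S - {b})"
    using h ab by auto
  show ?thesis unfolding tri_def using e1 e2 e3 d by blast
qed

lemma last_step:
  assumes c: "conn_in E W v w" and ne: "v \<noteq> w"
  shows "\<exists>p. conn_in E W v p \<and> E p w \<and> p \<in> W"
proof -
  have "w = v \<or> (\<exists>p. conn_in E W v p \<and> E p w \<and> p \<in> W)" using c
  proof (rule conn_induct[where P="\<lambda>w. w = v \<or> (\<exists>p. conn_in E W v p \<and> E p w \<and> p \<in> W)"])
    show "v = v \<or> (\<exists>p. conn_in E W v p \<and> E p v \<and> p \<in> W)" by simp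
  next
    fix x y assume "conn_in E W v x" "E x y" "x \<in> W"
    then show "y = v \<or> (\<exists>p. conn_in E W v p \<and> E p y \<and> p \<in> W)" by blast
  qed
  then show ?thesis using ne by auto
qed

lemma card_lt2:
  assumes "finite C" "card C < 2" "v \<in> C" "z \<in> C" shows "z = v"
proof (rule ccontr)
  assume "z \<noteq> v"
  then have "card {v, z} = 2" by simp
  moreover have "card {v, z} \<le> card C" using assms by (intro card_mono) auto
  ultimately show False using assms(2) by simp
qed

lemma Q:
  assumes g: "graph V E"
  shows "\<And>S u v. min_psd_forcing_set V E S \<Longrightarrow> psd_force V E S u v \<Longrightarrow>
     card (comp_in E (V - S) v) = n \<Longrightarrow> (2 \<le> n \<or> (\<exists>z. E v z \<and> z \<noteq> u)) \<Longrightarrow> tri V E"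
proof (induction n rule: less_induct)
  case (less n S u v)
  note m = less.prems(1) and f = less.prems(2)
  let ?C = "comp_in E (V - S) v"
  have fV: "finite V" using g by (simp add: graph_def)
  have finC: "finite ?C" by (rule finite_subset[OF _ fV]) (auto simp: comp_in_def conn_in_def)
  have fbs: "u \<in> S \<and> v \<in> V \<and> v \<notin> S" using f by (rule force_basic)
  have vC: "v \<in> ?C" using fbs by (simp add: comp_in_def conn_refl)
  have euv: "E u v" using f by (rule force_edge)
  have SV: "finite S \<and> S \<subseteq> V" using g m by (rule min_finite)
  show ?case
  proof (cases "2 \<le> n")
    case True
    have "?C \<noteq> {v}" using True less.prems(3) by auto
    then obtain x where x: "x \<in> ?C" "x \<noteq> v" using vC by blast
    have cx: "conn_in E (V - S) v x" using x by (simp add: comp_in_def)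
    let ?S1 = "insert v (S - {u})"
    have m1: "min_psd_forcing_set V E ?S1" using swap(2)[OF g m f] .
    have f1: "psd_force V E ?S1 v u" using swap(1)[OF g m f] .
    have xV: "x \<in> V" "x \<notin> S" using conn_W[OF cx] by auto
    have "x \<notin> ?S1" using xV x by auto
    then obtain y x' where yx: "psd_force V E ?S1 y x'" "conn_in E (V - ?S1) x x'"
      using first_force[OF g _ xV(1)] m1 unfolding min_psd_forcing_set_def by blast
    have inv: "conn_in E (V - S) v z \<and> z \<noteq> v \<and> z \<noteq> u" if cz: "conn_in E (V - ?S1) x z" for z
      using cz
    proof (rule conn_induct[where P="\<lambda>z. conn_in E (V - S) v z \<and> z \<noteq> v \<and> z \<noteq> u"])
      show "conn_in E (V - S) v x \<and> x \<noteq> v \<and> x \<noteq> u" using cx x xV fbs by auto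
    next
      fix x0 y0 assume a: "conn_in E (V - S) v x0 \<and> x0 \<noteq> v \<and> x0 \<noteq> u" "E x0 y0" "y0 \<in> V - ?S1"
      have y0v: "y0 \<noteq> v" using a(3) by simp
      have y0u: "y0 \<noteq> u"
      proof
        assume "y0 = u"
        then have "E u x0" using graph_E[OF g a(2)] by simp
        moreover have "conn_in E (V - S) v x0" using a(1) by simp
        ultimately have "x0 = v" by (rule force_N[OF f])
        then show False using a(1) by simp
      qed
      then have "y0 \<in> V - S" using a(3) by auto
      then have "conn_in E (V - S) v y0" using conn_step a(1,2) by metis
      then show "conn_in E (V - S) v y0 \<and> y0 \<noteq> v \<and> y0 \<noteq> u" using y0v y0u by simp
    qed
    let ?K = "comp_in E (V - ?S1) x'"
    have KC: "?K \<subseteq> ?C - {v}"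
    proof
      fix z assume "z \<in> ?K"
      then have "conn_in E (V - ?S1) x z" using conn_trans[OF yx(2)] by (simp add: comp_in_def)
      then show "z \<in> ?C - {v}" using inv by (simp add: comp_in_def)
    qed
    have "card ?K \<le> card (?C - {v})" using KC finC by (intro card_mono) auto
    also have "\<dots> < card ?C" using finC vC by (meson card_Diff1_less)
    finally have lt: "card ?K < n" using less.prems(3) by simp
    have finK: "finite ?K" using KC finC finite_subset by blast
    have fb1: "y \<in> ?S1 \<and> x' \<in> V \<and> x' \<notin> ?S1" using yx(1) by (rule force_basic)
    have x'K: "x' \<in> ?K" using fb1 by (simp add: comp_in_def conn_refl)
    show ?thesis
    proof (cases "2 \<le> card ?K \<or> (\<exists>z. E x' z \<and> z \<noteq> y)")
      case True
      then show ?thesis using less.IH[OF lt m1 yx(1) refl] by simp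
    next
      case False
      then have leaf: "\<And>z. E x' z \<Longrightarrow> z = y" by auto
      have cx': "conn_in E (V - S) v x' \<and> x' \<noteq> v \<and> x' \<noteq> u" using inv[OF yx(2)] .
      obtain p where p: "conn_in E (V - S) v p" "E p x'" "p \<in> V - S"
        using last_step[of E "V - S" v x'] cx' by blast
      have "E x' p" using graph_E[OF g p(2)] by simp
      then have "p = y" by (rule leaf)
      then have yv: "y = v" using fb1 p(3) by auto
      then have "psd_force V E ?S1 v x'" using yx(1) by simp
      then show ?thesis using T1[OF g m1 f1] cx' by metis
    qed
  next
    case False
    then obtain z where z: "E v z" "z \<noteq> u" using less.prems(4) by auto
    have lt2: "card ?C < 2" using False less.prems(3) by simp
    have gz: "v \<in> V \<and> z \<in> V \<and> v \<noteq> z \<and> E z v" using g z(1) by (rule graph_E)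
    have zS: "z \<in> S"
    proof (rule ccontr)
      assume "z \<notin> S"
      then have "conn_in E (V - S) v z" using conn_step[OF conn_refl[of v "V - S" E] z(1)] gz fbs by simp
      then have "z = v" using card_lt2[OF finC lt2 vC] by (simp add: comp_in_def)
      then show False using gz by simp
    qed
    have "psd_force V E S z v"
    proof (rule force_intro)
      show "z \<in> S" by (rule zS)
      show "v \<in> V" "v \<notin> S" using fbs by auto
      show "E z v" using gz by simp
      fix w assume "E z w" "conn_in E (V - S) v w"
      then show "w = v" using card_lt2[OF finC lt2 vC] by (simp add: comp_in_def)
    qed
    then show ?thesis using T2[OF g m f] z(2) by metis
  qed
qed



lemma comp_force:
  assumes g: "graph V E" and m: "min_psd_forcing_set V E S" and ab: "E a b"
  shows "\<exists>u v. psd_force V E S u v \<and> conn_in E V a v"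
proof -
  have ge: "a \<in> V \<and> b \<in> V \<and> a \<noteq> b \<and> E b a" using g ab by (rule graph_E)
  have ca: "conn_in E V a a" using ge by (simp add: conn_refl)
  have "\<exists>x. conn_in E V a x \<and> x \<notin> S"
  proof (rule ccontr)
    assume "\<not> ?thesis"
    then have all: "\<And>x. conn_in E V a x \<Longrightarrow> x \<in> S" by blast
    have aS: "a \<in> S" using all ca by blast
    have nb: "t \<in> S" if "E a t" for t
    proof -
      have "t \<in> V" using graph_E[OF g that] by simp
      then have "conn_in E V a t" using conn_step[OF ca that] by simp
      then show ?thesis by (rule all)
    qed
    show False using min_no_removable[OF g m aS ab nb] .
  qed
  then obtain x where x: "conn_in E V a x" "x \<notin> S" by blast
  have xV: "x \<in> V" using conn_W[OF x(1)] by simp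
  obtain u v where uv: "psd_force V E S u v" "conn_in E (V - S) x v"
    using first_force[OF g _ xV x(2)] m unfolding min_psd_forcing_set_def by blast
  have "conn_in E V x v" using conn_mono[OF uv(2)] by blast
  then have "conn_in E V a v" using conn_trans[OF x(1)] by simp
  then show ?thesis using uv(1) by blast
qed

lemma caseA:
  assumes g: "graph V E" and v0: "v0 \<in> V" and c3: "card (comp_in E V v0) \<ge> 3"
  shows "tri V E"
proof -
  let ?H = "comp_in E V v0"
  have fV: "finite V" using g by (simp add: graph_def)
  have finH: "finite ?H" by (rule finite_subset[OF _ fV]) (auto simp: comp_in_def conn_in_def)
  obtain S where m: "min_psd_forcing_set V E S" using zplus_facts(1)[OF g] by blast
  have "?H \<noteq> {v0}" using c3 by auto
  moreover have "v0 \<in> ?H" using v0 by (simp add: comp_in_def conn_refl)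
  ultimately obtain w where w: "w \<in> ?H" "w \<noteq> v0" by blast
  have "conn_in E V v0 w" using w by (simp add: comp_in_def)
  then have "conn_in E V w v0" using conn_sym[OF g] by blast
  then obtain p where p: "E p v0" using last_step w(2) by metis
  have "E v0 p" using graph_E[OF g p] by simp
  then obtain u v where uv: "psd_force V E S u v" "conn_in E V v0 v" using comp_force[OF g m] by blast
  have fbs: "u \<in> S \<and> v \<in> V \<and> v \<notin> S" using uv(1) by (rule force_basic)
  show ?thesis
  proof (cases "2 \<le> card (comp_in E (V - S) v) \<or> (\<exists>z. E v z \<and> z \<noteq> u)")
    case True
    then show ?thesis using Q[OF g m uv(1) refl] by simp
  next
    case False
    then have leaf: "\<And>z. E v z \<Longrightarrow> z = u" by auto
    have claim: "z = v \<or> z = u \<or> (\<exists>t. E u t \<and> t \<noteq> v)" if cz: "conn_in E V v z" for z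
      using cz
    proof (rule conn_induct[where P="\<lambda>z. z = v \<or> z = u \<or> (\<exists>t. E u t \<and> t \<noteq> v)"])
      show "v = v \<or> v = u \<or> (\<exists>t. E u t \<and> t \<noteq> v)" by simp
    next
      fix x y assume a: "x = v \<or> x = u \<or> (\<exists>t. E u t \<and> t \<noteq> v)" "E x y"
      show "y = v \<or> y = u \<or> (\<exists>t. E u t \<and> t \<noteq> v)"
        using a leaf by blast
    qed
    have "\<not> ?H \<subseteq> {u, v}"
    proof
      assume "?H \<subseteq> {u, v}"
      then have "card ?H \<le> card {u, v}" by (intro card_mono) auto
      also have "\<dots> \<le> 2" by (simp add: card_insert_le_m1)
      finally show False using c3 by simp
    qed
    then obtain z where z: "z \<in> ?H" "z \<notin> {u, v}" by blast
    have "conn_in E V v v0" using conn_sym[OF g uv(2)] .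
    moreover have "conn_in E V v0 z" using z by (simp add: comp_in_def)
    ultimately have "conn_in E V v z" using conn_trans by metis
    then obtain t where t: "E u t" "t \<noteq> v" using claim z(2) by blast
    have m1: "min_psd_forcing_set V E (insert v (S - {u}))" using swap(2)[OF g m uv(1)] .
    have f1: "psd_force V E (insert v (S - {u})) v u" using swap(1)[OF g m uv(1)] .
    show ?thesis using Q[OF g m1 f1 refl] t by blast
  qed
qed

lemma caseB:
  assumes g: "graph V E" and ab: "E a b" and cd: "E c d" and nc: "\<not> conn_in E V a c"
  shows "quad V E"
proof -
  obtain S where m: "min_psd_forcing_set V E S" using zplus_facts(1)[OF g] by blast
  obtain u1 v1 where f1: "psd_force V E S u1 v1" "conn_in E V a v1" using comp_force[OF g m ab] by blast
  obtain u2 v2 where f2: "psd_force V E S u2 v2" "conn_in E V c v2" using comp_force[OF g m cd] by blast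
  have b1: "u1 \<in> S \<and> v1 \<in> V \<and> v1 \<notin> S" using f1(1) by (rule force_basic)
  have b2: "u2 \<in> S \<and> v2 \<in> V \<and> v2 \<notin> S" using f2(1) by (rule force_basic)
  have e1: "u1 \<in> V \<and> v1 \<in> V \<and> u1 \<noteq> v1 \<and> E v1 u1" using graph_E[OF g force_edge[OF f1(1)]] .
  have e2: "u2 \<in> V \<and> v2 \<in> V \<and> u2 \<noteq> v2 \<and> E v2 u2" using graph_E[OF g force_edge[OF f2(1)]] .
  have cu1: "conn_in E V a u1" using conn_step[OF f1(2)] e1 by simp
  have cu2: "conn_in E V c u2" using conn_step[OF f2(2)] e2 by simp
  have disj: "\<not> conn_in E V c p" if "conn_in E V a p" for p
  proof
    assume "conn_in E V c p"
    then have "conn_in E V p c" using conn_sym[OF g] by blast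
    then show False using conn_trans[OF that] nc by blast
  qed
  have u12: "u1 \<noteq> u2" using disj[OF cu1] cu2 by blast
  have v12: "v1 \<noteq> v2" using disj[OF f1(2)] f2(2) by blast
  let ?S1 = "insert v1 (S - {u1})"
  let ?S2 = "insert v2 (S - {u2})"
  let ?S12 = "insert v2 (?S1 - {u2})"
  have m1: "min_psd_forcing_set V E ?S1" using swap(2)[OF g m f1(1)] .
  have m2: "min_psd_forcing_set V E ?S2" using swap(2)[OF g m f2(1)] .
  let ?H = "{p. conn_in E V c p}"
  have cl: "q \<in> ?H" if "p \<in> ?H" "E p q" for p q
    using that conn_step graph_E[OF g that(2)] by auto
  have hu1: "u1 \<notin> ?H" "v1 \<notin> ?H" using disj cu1 f1(2) by auto
  have eqH: "(V - S) \<inter> ?H = (V - ?S1) \<inter> ?H" using hu1 b1 by auto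
  have f21: "psd_force V E ?S1 u2 v2"
  proof (rule force_intro)
    show "u2 \<in> ?S1" using b2 u12 by simp
    show "v2 \<in> V" using b2 by simp
    show "v2 \<notin> ?S1" using b2 v12 by simp
    show "E u2 v2" using f2(1) by (rule force_edge)
    fix w assume w: "E u2 w" "conn_in E (V - ?S1) v2 w"
    have vH: "v2 \<in> ?H" using f2(2) by simp
    have "conn_in E (V - S) v2 w" by (rule conn_local[OF w(2) cl vH eqH[symmetric]])
    then show "w = v2" using force_N[OF f2(1) w(1)] by simp
  qed
  have m12: "min_psd_forcing_set V E ?S12" using swap(2)[OF g m1 f21] .
  have E1: "TE_edge V E S ?S1" by (rule TE_edgeI[OF m m1, of u1 v1]) (use b1 in auto)
  have E2: "TE_edge V E ?S1 ?S12" by (rule TE_edgeI[OF m1 m12, of u2 v2]) (use b1 b2 u12 v12 in auto)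
  have E3: "TE_edge V E ?S12 ?S2" by (rule TE_edgeI[OF m12 m2, of v1 u1]) (use b1 b2 u12 v12 in auto)
  have E4: "TE_edge V E ?S2 S" by (rule TE_edgeI[OF m2 m, of v2 u2]) (use b2 in auto)
  have d: "distinct [S, ?S1, ?S12, ?S2]" using b1 b2 u12 v12 by auto
  show ?thesis unfolding quad_def using E1 E2 E3 E4 d by blast
qed

lemma no_cycle_iso:
  assumes t: "is_tree T ET" and iso: "graph_iso TV TE T ET f"
    and cs: "set cs \<subseteq> TV" "is_cycle TE cs"
  shows False
proof -
  have bij: "bij_betw f TV T" using iso by (simp add: graph_iso_def)
  have ed: "\<And>x y. x \<in> TV \<Longrightarrow> y \<in> TV \<Longrightarrow> TE x y \<Longrightarrow> ET (f x) (f y)"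
    using iso by (simp add: graph_iso_def)
  have inj: "inj_on f (set cs)" using bij cs(1) bij_betw_imp_inj_on inj_on_subset by metis
  have img: "set (map f cs) \<subseteq> T" using bij cs(1) bij_betw_imp_surj_on by fastforce
  have l3: "length cs \<ge> 3" and dc: "distinct cs"
    and st: "\<forall>i. Suc i < length cs \<longrightarrow> TE (cs ! i) (cs ! Suc i)" and lh: "TE (last cs) (hd cs)"
    using cs(2) unfolding is_cycle_def by auto
  have ne: "cs \<noteq> []" using l3 by auto
  have "is_cycle ET (map f cs)"
    unfolding is_cycle_def
  proof (intro conjI allI impI)
    show "3 \<le> length (map f cs)" using l3 by simp
    show "distinct (map f cs)" using dc inj by (simp add: distinct_map)
    fix i assume i: "Suc i < length (map f cs)"
    then have "TE (cs ! i) (cs ! Suc i)" using st by simp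
    moreover have "cs ! i \<in> set cs" "cs ! Suc i \<in> set cs" using i by simp_all
    then have "cs ! i \<in> TV" "cs ! Suc i \<in> TV" using cs(1) by auto
    ultimately show "ET (map f cs ! i) (map f cs ! Suc i)" using ed i by simp
  next
    have "last cs \<in> TV" "hd cs \<in> TV" using ne cs(1) by auto
    then have "ET (f (last cs)) (f (hd cs))" using ed lh by simp
    then show "ET (last (map f cs)) (hd (map f cs))" using ne by (simp add: last_map hd_map)
  qed
  then show False using t img unfolding is_tree_def acyclic_graph_def by blast
qed

lemma edge_in: "TE_edge V E A B \<Longrightarrow> A \<in> TE_vertices V E \<and> B \<in> TE_vertices V E"
  unfolding TE_edge_def by simp

theorem theorem4p8:
  fixes V :: "'a set" and E :: "'a \<Rightarrow> 'a \<Rightarrow> bool"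
  assumes "graph V E"
    and "(\<exists>u v x y. E u v \<and> E x y \<and> \<not> conn_in E V u x) \<or> (\<exists>v\<in>V. card (comp_in E V v) \<ge> 3)"
  shows "\<not> (\<exists>(T :: 'b set) ET f. is_tree T ET \<and> graph_iso (TE_vertices V E) (TE_edge V E) T ET f)"
proof
  assume "\<exists>(T :: 'b set) ET f. is_tree T ET \<and> graph_iso (TE_vertices V E) (TE_edge V E) T ET f"
  then obtain T :: "'b set" and ET f where t: "is_tree T ET"
    and iso: "graph_iso (TE_vertices V E) (TE_edge V E) T ET f" by blast
  have "tri V E \<or> quad V E" using assms(2) caseA[OF assms(1)] caseB[OF assms(1)] by blast
  then show False
  proof
    assume "tri V E"
    then obtain A B D where e: "TE_edge V E A B" "TE_edge V E B D" "TE_edge V E D A"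
      "A \<noteq> B" "B \<noteq> D" "A \<noteq> D" unfolding tri_def by blast
    have s: "set [A, B, D] \<subseteq> TE_vertices V E" using e edge_in by auto
    have "is_cycle (TE_edge V E) [A, B, D]"
      unfolding is_cycle_def
    proof (intro conjI allI impI)
      fix i assume "Suc i < length [A, B, D]"
      then have "i = 0 \<or> i = 1" by auto
      then show "TE_edge V E ([A, B, D] ! i) ([A, B, D] ! Suc i)" using e by auto
    qed (use e in auto)
    then show False using no_cycle_iso[OF t iso s] by simp
  next
    assume "quad V E"
    then obtain A B C D where e: "TE_edge V E A B" "TE_edge V E B C" "TE_edge V E C D"
      "TE_edge V E D A" "distinct [A, B, C, D]" unfolding quad_def by blast
    have s: "set [A, B, C, D] \<subseteq> TE_vertices V E" using e edge_in by auto
    have "is_cycle (TE_edge V E) [A, B, C, D]"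
      unfolding is_cycle_def
    proof (intro conjI allI impI)
      fix i assume "Suc i < length [A, B, C, D]"
      then have "i = 0 \<or> i = 1 \<or> i = 2" by auto
      then show "TE_edge V E ([A, B, C, D] ! i) ([A, B, C, D] ! Suc i)" using e by auto
    qed (use e in auto)
    then show False using no_cycle_iso[OF t iso s] by simp
  qed
qed

end
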